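(* There is no perfect lattice code in $\mathcal{A}(n,n-2,\ell)$ if $n\ge 4$ and $\ell\ge 2$.
   Context: For integers $n\ge 1$, $0\le t\le n$, $\ell\ge 1$, let $\mathcal{S}(n,t,\ell)=\{\mathcal{E}\in\mathbb{Z}^n: 0\le\varepsilon_i\le\ell \text{ for all } i,\ w_H(\mathcal{E})\le t\}$, where $w_H$ is the number of nonzero coordinates. A lattice here is the set of integer combinations of $n$ linearly independent vectors of $\mathbb{Z}^n$. $\mathcal{A}(n,t,\ell)$ is the set of lattices $\mathcal{L}\subseteq\mathbb{Z}^n$ such that the translates $X+\mathcal{S}(n,t,\ell)$, $X\in\mathcal{L}$, are pairwise disjoint. Such $\mathcal{L}$ is perfect if these translates also cover $\mathbb{Z}^n$. *)

theory Defs
  imports Complex_Main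
begin

text \<open>Points of Z^n are functions nat => int that vanish outside {0..<n}.\<close>

definition zvec :: "nat \<Rightarrow> (nat \<Rightarrow> int) set" where
  "zvec n = {x. \<forall>i. i \<ge> n \<longrightarrow> x i = 0}"

definition hamming_weight :: "nat \<Rightarrow> (nat \<Rightarrow> int) \<Rightarrow> nat" where
  "hamming_weight n x = card {i. i < n \<and> x i \<noteq> 0}"

definition shapeS :: "nat \<Rightarrow> nat \<Rightarrow> nat \<Rightarrow> (nat \<Rightarrow> int) set" where
  "shapeS n t l = {e \<in> zvec n. (\<forall>i<n. 0 \<le> e i \<and> e i \<le> int l) \<and> hamming_weight n e \<le> t}"

definition lin_indep_int :: "nat \<Rightarrow> (nat \<Rightarrow> nat \<Rightarrow> int) \<Rightarrow> bool" where
  "lin_indep_int n b \<longleftrightarrow> (\<forall>i<n. b i \<in> zvec n) \<and>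
     (\<forall>c :: nat \<Rightarrow> real. (\<forall>j<n. (\<Sum>i<n. c i * real_of_int (b i j)) = 0) \<longrightarrow> (\<forall>i<n. c i = 0))"

definition lattice_gen :: "nat \<Rightarrow> (nat \<Rightarrow> nat \<Rightarrow> int) \<Rightarrow> (nat \<Rightarrow> int) set" where
  "lattice_gen n b = {x. \<exists>c :: nat \<Rightarrow> int. x = (\<lambda>j. \<Sum>i<n. c i * b i j)}"

definition is_lattice :: "nat \<Rightarrow> (nat \<Rightarrow> int) set \<Rightarrow> bool" where
  "is_lattice n L \<longleftrightarrow> (\<exists>b. lin_indep_int n b \<and> L = lattice_gen n b)"

definition translate :: "(nat \<Rightarrow> int) \<Rightarrow> (nat \<Rightarrow> int) set \<Rightarrow> (nat \<Rightarrow> int) set" where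
  "translate X S = (\<lambda>e. (\<lambda>j. X j + e j)) ` S"

definition in_A :: "nat \<Rightarrow> nat \<Rightarrow> nat \<Rightarrow> (nat \<Rightarrow> int) set \<Rightarrow> bool" where
  "in_A n t l L \<longleftrightarrow> is_lattice n L \<and>
     (\<forall>X\<in>L. \<forall>Y\<in>L. X \<noteq> Y \<longrightarrow> translate X (shapeS n t l) \<inter> translate Y (shapeS n t l) = {})"

definition perfect :: "nat \<Rightarrow> nat \<Rightarrow> nat \<Rightarrow> (nat \<Rightarrow> int) set \<Rightarrow> bool" where
  "perfect n t l L \<longleftrightarrow> in_A n t l L \<and> (\<Union>X\<in>L. translate X (shapeS n t l)) = zvec n"

end

theory Submission
  imports Defs
begin

lemma disj_lemma:
  assumes "in_A n t l L" "X \<in> L" "Y \<in> L" "a \<in> shapeS n t l" "b \<in> shapeS n t l"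
    and "\<And>j. X j + a j = Y j + b j"
  shows "X = Y"
proof (rule ccontr)
  assume "X \<noteq> Y"
  with assms have "translate X (shapeS n t l) \<inter> translate Y (shapeS n t l) = {}"
    unfolding in_A_def by blast
  moreover have "(\<lambda>j. X j + a j) \<in> translate X (shapeS n t l)"
    using assms(4) unfolding translate_def by blast
  moreover have "(\<lambda>j. X j + a j) \<in> translate Y (shapeS n t l)"
    using assms(5,6) unfolding translate_def by (auto intro!: image_eqI[of _ _ b])
  ultimately show False by blast
qed

lemma lat_zero: "is_lattice n L \<Longrightarrow> (\<lambda>j. 0) \<in> L"
  unfolding is_lattice_def lattice_gen_def
  by (auto intro!: exI[of _ "\<lambda>i. 0"])

lemma lat_add: "is_lattice n L \<Longrightarrow> X \<in> L \<Longrightarrow> Y \<in> L \<Longrightarrow> (\<lambda>j. X j + Y j) \<in> L"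
proof -
  assume "is_lattice n L" "X \<in> L" "Y \<in> L"
  then obtain b where L: "L = lattice_gen n b" unfolding is_lattice_def by blast
  from \<open>X \<in> L\<close> L obtain c1 where c1: "X = (\<lambda>j. \<Sum>i<n. c1 i * b i j)"
    unfolding lattice_gen_def by blast
  from \<open>Y \<in> L\<close> L obtain c2 where c2: "Y = (\<lambda>j. \<Sum>i<n. c2 i * b i j)"
    unfolding lattice_gen_def by blast
  have "(\<lambda>j. X j + Y j) = (\<lambda>j. \<Sum>i<n. (c1 i + c2 i) * b i j)"
    unfolding c1 c2 by (simp add: distrib_right sum.distrib)
  then show ?thesis unfolding L lattice_gen_def
    by (intro CollectI exI[of _ "\<lambda>i. c1 i + c2 i"])
qed

lemma card_two_less:
  assumes "k < n" "i < n" "k \<noteq> i"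
  shows "card {j. j < n \<and> j \<noteq> k \<and> j \<noteq> i} = n - 2"
proof -
  have "{j. j < n \<and> j \<noteq> k \<and> j \<noteq> i} = {..<n} - {k, i}" by auto
  moreover have "card ({..<n} - {k, i}) = n - 2"
    using assms by (subst card_Diff_subset) auto
  ultimately show ?thesis by simp
qed

lemma card_one_less:
  assumes "k < n"
  shows "card {j. j < n \<and> j \<noteq> k} = n - 1"
proof -
  have "{j. j < n \<and> j \<noteq> k} = {..<n} - {k}" by auto
  moreover have "card ({..<n} - {k}) = n - 1"
    using assms by (subst card_Diff_subset) auto
  ultimately show ?thesis by simp
qed

lemma step1:
  assumes perf: "perfect n (n - 2) l L" and n4: "n \<ge> 4" and l2: "l \<ge> 2" and kn: "k < n"
  shows "\<exists>X\<in>L. \<exists>c::int. 1 \<le> c \<and> c \<le> int l + 1 \<and>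
           (\<forall>j. X j + (if j = k then c else 0) = (if j < n then 1 else 0))"
proof -
  define q where "q = (\<lambda>j::nat. if j < n then (if j = k then 0 else 1) else (0::int))"
  have "q \<in> zvec n" unfolding q_def zvec_def by auto
  with perf obtain X where X: "X \<in> L" "q \<in> translate X (shapeS n (n-2) l)"
    unfolding perfect_def by blast
  then obtain s where s: "s \<in> shapeS n (n-2) l" "q = (\<lambda>j. X j + s j)"
    unfolding translate_def by blast
  have inA: "in_A n (n-2) l L" using perf unfolding perfect_def by blast
  have isl: "is_lattice n L" using inA unfolding in_A_def by blast
  have sz: "\<And>j. j \<ge> n \<Longrightarrow> s j = 0" using s(1) unfolding shapeS_def zvec_def by auto
  have sb: "\<And>j. j < n \<Longrightarrow> 0 \<le> s j \<and> s j \<le> int l" using s(1) unfolding shapeS_def by auto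
  have sw: "hamming_weight n s \<le> n - 2" using s(1) unfolding shapeS_def by auto
  have Xq: "\<And>j. X j = q j - s j" using s(2) by (metis add_diff_cancel_right' )
  have zero_other: "\<forall>i. i < n \<and> i \<noteq> k \<longrightarrow> s i = 0"
  proof (rule ccontr)
    assume "\<not> ?thesis"
    then obtain i0 where i0: "i0 < n" "i0 \<noteq> k" "s i0 \<noteq> 0" by blast
    define a where "a = (\<lambda>j. max (X j) 0)"
    define b where "b = (\<lambda>j. max (- X j) 0)"
    have a_in: "a \<in> shapeS n (n-2) l"
    proof -
      have "a \<in> zvec n" unfolding zvec_def a_def using Xq sz by (auto simp: q_def)
      moreover have "\<forall>i<n. 0 \<le> a i \<and> a i \<le> int l"
      proof (intro allI impI)
        fix i assume "i < n"
        then show "0 \<le> a i \<and> a i \<le> int l"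
          using Xq[of i] sb[of i] l2 by (auto simp: a_def q_def)
      qed
      moreover have "hamming_weight n a \<le> n - 2"
      proof -
        have "{i. i < n \<and> a i \<noteq> 0} \<subseteq> {j. j < n \<and> j \<noteq> k \<and> j \<noteq> i0}"
        proof
          fix i assume "i \<in> {i. i < n \<and> a i \<noteq> 0}"
          then have "i < n" "X i > 0" by (auto simp: a_def)
          then show "i \<in> {j. j < n \<and> j \<noteq> k \<and> j \<noteq> i0}"
            using Xq[of i] sb[of i] i0 by (auto simp: q_def split: if_splits)
        qed
        then have "card {i. i < n \<and> a i \<noteq> 0} \<le> card {j. j < n \<and> j \<noteq> k \<and> j \<noteq> i0}"
          by (intro card_mono) auto
        then show ?thesis using card_two_less[OF kn i0(1)] i0(2)
          unfolding hamming_weight_def by simp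
      qed
      ultimately show ?thesis unfolding shapeS_def by blast
    qed
    have b_in: "b \<in> shapeS n (n-2) l"
    proof -
      have "b \<in> zvec n" unfolding zvec_def b_def using Xq sz by (auto simp: q_def)
      moreover have "\<forall>i<n. 0 \<le> b i \<and> b i \<le> int l"
      proof (intro allI impI)
        fix i assume "i < n"
        then show "0 \<le> b i \<and> b i \<le> int l"
          using Xq[of i] sb[of i] l2 by (auto simp: b_def q_def)
      qed
      moreover have "hamming_weight n b \<le> n - 2"
      proof -
        have "{i. i < n \<and> b i \<noteq> 0} \<subseteq> {i. i < n \<and> s i \<noteq> 0}"
          using Xq sb by (auto simp: b_def q_def)
        then have "card {i. i < n \<and> b i \<noteq> 0} \<le> card {i. i < n \<and> s i \<noteq> 0}"
          by (intro card_mono) auto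
        then show ?thesis using sw unfolding hamming_weight_def by simp
      qed
      ultimately show ?thesis unfolding shapeS_def by blast
    qed
    have "\<And>j. X j + b j = 0 + a j" by (simp add: a_def b_def max_def)
    from disj_lemma[OF inA X(1) lat_zero[OF isl] b_in a_in this]
    have "X = (\<lambda>j. 0)" .
    then have "q = s" using s(2) by auto
    then have "hamming_weight n q \<le> n - 2" using sw by simp
    moreover have "{i. i < n \<and> q i \<noteq> 0} = {j. j < n \<and> j \<noteq> k}" by (auto simp: q_def)
    ultimately show False using card_one_less[OF kn] n4 unfolding hamming_weight_def by simp
  qed
  show ?thesis
  proof (intro bexI[OF _ X(1)] exI[of _ "1 + s k"] conjI allI)
    show "1 \<le> 1 + s k" "1 + s k \<le> int l + 1" using sb[OF kn] by auto
    fix j show "X j + (if j = k then 1 + s k else 0) = (if j < n then 1 else 0)"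
      using Xq[of j] zero_other sz[of j] kn by (auto simp: q_def)
  qed
qed

theorem mainTheorem7:
  fixes n l :: nat
  assumes "n \<ge> 4" and "l \<ge> 2"
  shows "\<not> (\<exists>L. perfect n (n - 2) l L)"
proof
  assume "\<exists>L. perfect n (n - 2) l L"
  then obtain L where perf: "perfect n (n - 2) l L" by blast
  have inA: "in_A n (n-2) l L" using perf unfolding perfect_def by blast
  have isl: "is_lattice n L" using inA unfolding in_A_def by blast
  have ex: "\<forall>k<n. \<exists>X\<in>L. \<exists>c::int. 1 \<le> c \<and> c \<le> int l + 1 \<and>
           (\<forall>j. X j + (if j = k then c else 0) = (if j < n then 1 else 0))"
    using step1[OF perf assms] by blast
  obtain XX cc where XX: "\<And>k. k < n \<Longrightarrow> XX k \<in> L \<and> 1 \<le> cc k \<and> cc k \<le> int l + 1 \<and>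
           (\<forall>j. XX k j + (if j = k then cc k else 0) = (if j < n then 1 else 0))"
    using ex by metis
  have small: False if jk: "j < n" "k < n" "j \<noteq> k" "cc j \<le> int l" "cc k \<le> int l" for j k
  proof -
    define a where "a = (\<lambda>i. if i = j then cc j else 0)"
    define b where "b = (\<lambda>i. if i = k then cc k else 0)"
    have a_in: "a \<in> shapeS n (n-2) l"
    proof -
      have "{i. i < n \<and> a i \<noteq> 0} \<subseteq> {j}" by (auto simp: a_def)
      then have "card {i. i < n \<and> a i \<noteq> 0} \<le> 1"
        using card_mono[of "{j}"] by fastforce
      then show ?thesis using XX[OF jk(1)] jk assms
        unfolding shapeS_def zvec_def hamming_weight_def by (auto simp: a_def)
    qed
    have b_in: "b \<in> shapeS n (n-2) l"
    proof -
      have "{i. i < n \<and> b i \<noteq> 0} \<subseteq> {k}" by (auto simp: b_def)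
      then have "card {i. i < n \<and> b i \<noteq> 0} \<le> 1"
        using card_mono[of "{k}"] by fastforce
      then show ?thesis using XX[OF jk(2)] jk assms
        unfolding shapeS_def zvec_def hamming_weight_def by (auto simp: b_def)
    qed
    have "\<And>i. XX j i + a i = XX k i + b i"
      using XX[OF jk(1)] XX[OF jk(2)] by (simp add: a_def b_def)
    from disj_lemma[OF inA _ _ a_in b_in this] XX[OF jk(1)] XX[OF jk(2)]
    have "XX j = XX k" by blast
    then have "XX j j = XX k j" by simp
    then show False using XX[OF jk(1)] XX[OF jk(2)] jk
      by (metis add.right_neutral add_cancel_right_right not_one_le_zero)
  qed
  have big: False if jk: "j < n" "k < n" "j \<noteq> k" "cc j = int l + 1" "cc k = int l + 1" for j k
  proof -
    define Z where "Z = (\<lambda>i. XX j i + XX k i)"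
    have ZL: "Z \<in> L" unfolding Z_def using lat_add[OF isl] XX[OF jk(1)] XX[OF jk(2)] by blast
    define a where "a = (\<lambda>i. if i < n \<and> i \<noteq> j \<and> i \<noteq> k then (2::int) else 0)"
    define b where "b = (\<lambda>i. if i = j \<or> i = k then int l - 1 else 0)"
    have a_in: "a \<in> shapeS n (n-2) l"
    proof -
      have "{i. i < n \<and> a i \<noteq> 0} = {i. i < n \<and> i \<noteq> j \<and> i \<noteq> k}" by (auto simp: a_def)
      then have "hamming_weight n a \<le> n - 2"
        using card_two_less[OF jk(1,2)] jk(3) unfolding hamming_weight_def by simp
      then show ?thesis using assms unfolding shapeS_def zvec_def by (auto simp: a_def)
    qed
    have b_in: "b \<in> shapeS n (n-2) l"
    proof -
      have "{i. i < n \<and> b i \<noteq> 0} \<subseteq> {j, k}" by (auto simp: b_def)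
      then have "card {i. i < n \<and> b i \<noteq> 0} \<le> card {j, k}"
        by (intro card_mono) auto
      also have "\<dots> \<le> 2" by (simp add: card_insert_if)
      finally have "hamming_weight n b \<le> n - 2"
        using assms unfolding hamming_weight_def by simp
      then show ?thesis using assms jk unfolding shapeS_def zvec_def by (auto simp: b_def)
    qed
    have "\<And>i. Z i + b i = (\<lambda>i. 0) i + a i"
    proof -
      fix i
      have 1: "XX j i = (if i < n then 1 else 0) - (if i = j then cc j else 0)"
        using XX[OF jk(1)] by (metis add_diff_cancel_right')
      have 2: "XX k i = (if i < n then 1 else 0) - (if i = k then cc k else 0)"
        using XX[OF jk(2)] by (metis add_diff_cancel_right')
      show "Z i + b i = (\<lambda>i. 0) i + a i"
        unfolding Z_def 1 2 a_def b_def using jk by auto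
    qed
    from disj_lemma[OF inA ZL lat_zero[OF isl] b_in a_in this]
    have "Z = (\<lambda>i. 0)" .
    then have "Z j = 0" by simp
    moreover have "XX j j = 1 - cc j"
      using XX[OF jk(1)] jk by (metis add_diff_cancel_right')
    moreover have "XX k j = 1"
      using spec[OF conjunct2[OF conjunct2[OF conjunct2[OF XX[OF jk(2)]]]], of j] jk by simp
    ultimately show False using jk assms unfolding Z_def by simp
  qed
  have c: "\<And>k. k < n \<Longrightarrow> cc k \<le> int l \<or> cc k = int l + 1" using XX by fastforce
  have "0 < n" "1 < n" "2 < n" using assms by auto
  then show False using c small big
    by (metis zero_neq_one one_neq_zero numeral_One num.distinct(1) zero_neq_numeral
        numeral_eq_iff num.distinct(2) semiring_norm(85) n_not_Suc_n Suc_1 nat.inject)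
qed

end
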